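(* Let $\lambda\ge\lambda_0$ be such that every state of $\mathcal{E}^o\cup\mathcal{E}^a$ is transient for $\{\varphi^\lambda_t\}_{t\ge0}$ (so that $\tau<\infty$ almost surely from every starting state in $\mathcal{E}^o\cup\mathcal{E}^a$). Let $M=\begin{bmatrix}T^+-\lambda I & T^-\\ T^- & T^+-\lambda I\end{bmatrix}$ (a $2p\times 2p$ matrix). Then for every $i\in\{1,\dots,p\}$ the signed measure $$B\mapsto \mathbb{E}_{i^o}\big[\mathbb{1}\{\tau\in B\}\,\beta(\varphi^\lambda_\tau)\big]=\mathbb{P}_{i^o}(\tau\in B,\varphi^\lambda_\tau=\Delta^o)-\mathbb{P}_{i^o}(\tau\in B,\varphi^\lambda_\tau=\Delta^a)$$ on Borel sets $B\subseteq[0,\infty)$ is absolutely continuous with respect to Lebesgue measure, with density $$x\mapsto \bm{e}_i^\intercal e^{(T-\lambda I)x}\bm{s}=(\bm{e}_i^\intercal,\bm{0})\,e^{Mx}\begin{bmatrix}\bm{s}\\-\bm{s}\end{bmatrix},\qquad x\ge0.$$ Moreover, the signed measure $B\mapsto \mathbb{E}_{i^a}[\mathbb{1}\{\tau\in B\}\beta(\varphi^\lambda_\tau)]$ has density $$x\mapsto -\bm{e}_i^\intercal e^{(T-\lambda I)x}\bm{s}=(\bm{0},\bm{e}_i^\intercal)\,e^{Mx}\begin{bmatrix}\bm{s}\\-\bm{s}\end{bmatrix},\qquad x\ge0.$$ Here $\bm{e}_i$ is the $i$-th standard basis column vector of $\mathbb{R}^p$ and $\bm{0}$ the zero row vector of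 $\mathbb{R}^p$.
   Context: Let $p\ge1$, let $T=(t_{ij})_{1\le i,j\le p}$ be a real $p\times p$ matrix and $\bm{s}=(s_1,\dots,s_p)^\intercal$ a real column vector. Define $p\times p$ matrices $T^+=(t^+_{ij})$, $T^-=(t^-_{ij})$ by $t^+_{ij}=\max\{0,t_{ij}\}$, $t^-_{ij}=\max\{0,-t_{ij}\}$ for $i\neq j$, and $t^+_{ii}=t_{ii}$, $t^-_{ii}=0$ (so $T^+$ has nonnegative off-diagonal entries, $T^-$ is nonnegative, and $T=T^+-T^-$). Define column vectors $\bm{s}^\pm$ by $s^\pm_i=\max\{0,\pm s_i\}$, so $\bm{s}=\bm{s}^+-\bm{s}^-$. Let $\lambda_0=\min\{r\ge0:\ t_{ii}+\sum_{j\neq i}|t_{ij}|+|s_i|\le r\text{ for all }1\le i\le p\}$. For $\lambda\ge\lambda_0$, let $\{\varphi^\lambda_t\}_{t\ge0}$ be a continuous-time Markov jump process on $\mathcal{E}=\mathcal{E}^o\cup\mathcal{E}^a\cup\{\Delta^o\}\cup\{\Delta^a\}$, where $\mathcal{E}^o=\{1^o,\dots,p^o\}$ ("original states") and $\mathcal{E}^a=\{1^a,\dots,p^a\}$ ("anti-states"), with subintensity matrix (states ordered $\mathcal{E}^o,\mathcal{E}^a,\Delta^o,\Delta^a$) $$G=\begin{bmatrix}T^+-\lambda I & T^- & \bm{s}^+ & \bm{s}^-\\ T^- & T^+-\lambda I & \bm{s}^- & \bm{s}^+\\ \bm{0}&\bm{0}&0&0\\ \bm{0}&\bm{0}&0&0\end{bmatrix}.$$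 Thus $\Delta^o,\Delta^a$ are absorbing, and from a state in $\mathcal{E}^o\cup\mathcal{E}^a$ the process is killed (terminated) at rate equal to minus the corresponding row sum of $G$ (which is $\ge0$ since $\lambda\ge\lambda_0$); upon killing it is sent to a cemetery state $\dagger$. Let $\tau=\inf\{x\ge0:\varphi^\lambda_x\notin\mathcal{E}^o\cup\mathcal{E}^a\}$ and define $\beta(\Delta^o)=1$, $\beta(\Delta^a)=-1$, $\beta(\dagger)=0$. For $j\in\mathcal{E}$, $\mathbb{P}_j,\mathbb{E}_j$ denote probability and expectation conditional on $\varphi^\lambda_0=j$. *)

theory Defs
  imports "HOL-Probability.Probability"
begin

definition mmult :: "'s set \<Rightarrow> ('s \<Rightarrow> 's \<Rightarrow> real) \<Rightarrow> ('s \<Rightarrow> 's \<Rightarrow> real) \<Rightarrow> 's \<Rightarrow> 's \<Rightarrow> real" where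
  "mmult S A B = (\<lambda>i j. \<Sum>k\<in>S. A i k * B k j)"

fun mpow :: "'s set \<Rightarrow> ('s \<Rightarrow> 's \<Rightarrow> real) \<Rightarrow> nat \<Rightarrow> 's \<Rightarrow> 's \<Rightarrow> real" where
  "mpow S A 0 = (\<lambda>i j. if i = j then 1 else 0)"
| "mpow S A (Suc n) = mmult S (mpow S A n) A"

definition mexp :: "'s set \<Rightarrow> ('s \<Rightarrow> 's \<Rightarrow> real) \<Rightarrow> 's \<Rightarrow> 's \<Rightarrow> real" where
  "mexp S A = (\<lambda>i j. \<Sum>n. mpow S A n i j / fact n)"

definition mscale :: "real \<Rightarrow> ('s \<Rightarrow> 's \<Rightarrow> real) \<Rightarrow> 's \<Rightarrow> 's \<Rightarrow> real" where
  "mscale x A = (\<lambda>i j. x * A i j)"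

text \<open>P is a probability measure under which X (paths indexed by times t \<ge> 0) is a
  Markov jump process with generator Q on S started in j: right-constant paths in S,
  and finite-dimensional distributions given by the transition function exp(Q t).\<close>
definition ctmc :: "'s set \<Rightarrow> ('s \<Rightarrow> 's \<Rightarrow> real) \<Rightarrow> 'w measure \<Rightarrow> ('w \<Rightarrow> real \<Rightarrow> 's) \<Rightarrow> 's \<Rightarrow> bool" where
  "ctmc S Q P X j \<longleftrightarrow>
     prob_space P \<and>
     (\<forall>t\<ge>0. (\<lambda>\<omega>. X \<omega> t) \<in> measurable P (count_space UNIV)) \<and>
     (\<forall>\<omega>\<in>space P. \<forall>t\<ge>0. X \<omega> t \<in> S \<and> (\<exists>\<epsilon>>0. \<forall>u. t \<le> u \<and> u < t + \<epsilon> \<longrightarrow> X \<omega> u = X \<omega> t)) \<and>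
     (\<forall>(n::nat) (t::nat \<Rightarrow> real) (k::nat \<Rightarrow> 's).
        t 0 = 0 \<and> (\<forall>m<n. t m \<le> t (Suc m)) \<and> (\<forall>m\<le>n. k m \<in> S) \<longrightarrow>
        measure P {\<omega>\<in>space P. \<forall>m\<le>n. X \<omega> (t m) = k m}
          = (if k 0 = j then 1 else 0) *
            (\<Prod>m<n. mexp S (mscale (t (Suc m) - t m) Q) (k m) (k (Suc m))))"

datatype st = Ost nat | Ast nat | DeltaO | DeltaA | Cem

definition Estates :: "nat \<Rightarrow> st set" where
  "Estates p = Ost ` {1..p} \<union> Ast ` {1..p}"

definition Sall :: "nat \<Rightarrow> st set" where
  "Sall p = Estates p \<union> {DeltaO, DeltaA, Cem}"

definition Tplus :: "(nat \<Rightarrow> nat \<Rightarrow> real) \<Rightarrow> nat \<Rightarrow> nat \<Rightarrow> real" where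
  "Tplus T i j = (if i = j then T i i else max 0 (T i j))"

definition Tminus :: "(nat \<Rightarrow> nat \<Rightarrow> real) \<Rightarrow> nat \<Rightarrow> nat \<Rightarrow> real" where
  "Tminus T i j = (if i = j then 0 else max 0 (- T i j))"

definition splus :: "(nat \<Rightarrow> real) \<Rightarrow> nat \<Rightarrow> real" where
  "splus s i = max 0 (s i)"

definition sminus :: "(nat \<Rightarrow> real) \<Rightarrow> nat \<Rightarrow> real" where
  "sminus s i = max 0 (- s i)"

definition lambda0 :: "nat \<Rightarrow> (nat \<Rightarrow> nat \<Rightarrow> real) \<Rightarrow> (nat \<Rightarrow> real) \<Rightarrow> real" where
  "lambda0 p T s = (LEAST r. 0 \<le> r \<and>
      (\<forall>i\<in>{1..p}. T i i + (\<Sum>j\<in>{1..p}-{i}. \<bar>T i j\<bar>) + \<bar>s i\<bar> \<le> r))"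

fun Gmat :: "(nat \<Rightarrow> nat \<Rightarrow> real) \<Rightarrow> (nat \<Rightarrow> real) \<Rightarrow> real \<Rightarrow> st \<Rightarrow> st \<Rightarrow> real" where
  "Gmat T s l (Ost i) (Ost j) = Tplus T i j - (if i = j then l else 0)"
| "Gmat T s l (Ost i) (Ast j) = Tminus T i j"
| "Gmat T s l (Ost i) DeltaO = splus s i"
| "Gmat T s l (Ost i) DeltaA = sminus s i"
| "Gmat T s l (Ast i) (Ost j) = Tminus T i j"
| "Gmat T s l (Ast i) (Ast j) = Tplus T i j - (if i = j then l else 0)"
| "Gmat T s l (Ast i) DeltaO = sminus s i"
| "Gmat T s l (Ast i) DeltaA = splus s i"
| "Gmat T s l _ _ = 0"

definition Qfull :: "nat \<Rightarrow> (nat \<Rightarrow> nat \<Rightarrow> real) \<Rightarrow> (nat \<Rightarrow> real) \<Rightarrow> real \<Rightarrow> st \<Rightarrow> st \<Rightarrow> real" where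
  "Qfull p T s l a b =
     (if a \<in> Estates p then
        (if b = Cem then - (\<Sum>c\<in>Estates p \<union> {DeltaO, DeltaA}. Gmat T s l a c) else Gmat T s l a b)
      else 0)"

definition tau :: "nat \<Rightarrow> ('w \<Rightarrow> real \<Rightarrow> st) \<Rightarrow> 'w \<Rightarrow> real" where
  "tau p X \<omega> = Inf {x. 0 \<le> x \<and> X \<omega> x \<notin> Estates p}"

fun beta :: "st \<Rightarrow> real" where
  "beta DeltaO = 1"
| "beta DeltaA = -1"
| "beta _ = 0"

text \<open>Transience (Norris): the set of times spent in j is a.s. bounded.\<close>
definition transient :: "'w measure \<Rightarrow> ('w \<Rightarrow> real \<Rightarrow> st) \<Rightarrow> st \<Rightarrow> bool" where
  "transient P X j \<longleftrightarrow> (AE \<omega> in P. bounded {t. 0 \<le> t \<and> X \<omega> t = j})"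

end

theory Submission
  imports Defs
begin


lemma mpow_mscale: "mpow S (mscale x A) n i j = x^n * mpow S A n i j"
proof (induction n arbitrary: j)
  case 0 then show ?case by simp
next
  case (Suc n)
  have "mpow S (mscale x A) (Suc n) i j = (\<Sum>k\<in>S. mpow S (mscale x A) n i k * mscale x A k j)"
    by (simp add: mmult_def)
  also have "\<dots> = (\<Sum>k\<in>S. x^Suc n * (mpow S A n i k * A k j))"
    by (rule sum.cong, rule refl, subst Suc.IH, simp add: mscale_def)
  finally show ?case by (simp add: mmult_def sum_distrib_left)
qed

lemma mpow_bound:
  assumes "finite S" "j \<in> S"
  shows "\<bar>mpow S A n i j\<bar> \<le> (1 + (\<Sum>a\<in>S. \<Sum>b\<in>S. \<bar>A a b\<bar>))^n"
  using assms(2)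
proof (induction n arbitrary: j)
  case 0 then show ?case by simp
next
  case (Suc n)
  define C where "C = 1 + (\<Sum>a\<in>S. \<Sum>b\<in>S. \<bar>A a b\<bar>)"
  have C0: "0 \<le> C" unfolding C_def by (simp add: sum_nonneg add_nonneg_nonneg)
  have "\<bar>mpow S A (Suc n) i j\<bar> = \<bar>\<Sum>k\<in>S. mpow S A n i k * A k j\<bar>" by (simp add: mmult_def)
  also have "\<dots> \<le> (\<Sum>k\<in>S. \<bar>mpow S A n i k\<bar> * \<bar>A k j\<bar>)"
    by (rule order_trans[OF sum_abs]) (simp add: abs_mult)
  also have "\<dots> \<le> (\<Sum>k\<in>S. C^n * \<bar>A k j\<bar>)"
    by (rule sum_mono) (use Suc.IH in \<open>auto simp: C_def intro: mult_right_mono\<close>)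
  also have "\<dots> = C^n * (\<Sum>k\<in>S. \<bar>A k j\<bar>)" by (simp add: sum_distrib_left)
  also have "(\<Sum>k\<in>S. \<bar>A k j\<bar>) \<le> (\<Sum>k\<in>S. \<Sum>b\<in>S. \<bar>A k b\<bar>)"
    by (rule sum_mono) (rule member_le_sum, use assms Suc.prems in auto)
  then have "(\<Sum>k\<in>S. \<bar>A k j\<bar>) \<le> C" unfolding C_def by linarith
  then have "C^n * (\<Sum>k\<in>S. \<bar>A k j\<bar>) \<le> C^n * C" by (rule mult_left_mono) (use C0 in auto)
  finally show ?case by (simp add: C_def mult.commute)
qed

lemma mpow_summable:
  assumes "finite S" "j \<in> S"
  shows "summable (\<lambda>n. (mpow S A n i j / fact n) * y^n)"
proof -
  define C where "C = 1 + (\<Sum>a\<in>S. \<Sum>b\<in>S. \<bar>A a b\<bar>)"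
  have "summable (\<lambda>n. inverse (fact n) * (C * \<bar>y\<bar>)^n)" by (rule summable_exp)
  moreover have "norm ((mpow S A n i j / fact n) * y^n) \<le> inverse (fact n) * (C * \<bar>y\<bar>)^n" for n
  proof -
    have "norm ((mpow S A n i j / fact n) * y^n) = \<bar>mpow S A n i j\<bar> * \<bar>y\<bar>^n * inverse (fact n)"
      by (simp add: abs_mult power_abs divide_inverse)
    also have "\<dots> \<le> C^n * \<bar>y\<bar>^n * inverse (fact n)"
      using mpow_bound[OF assms, of A n i] unfolding C_def
      by (intro mult_right_mono) auto
    finally show ?thesis by (simp add: power_mult_distrib mult.commute)
  qed
  ultimately show ?thesis by (rule summable_comparison_test'[where N=0])
qed

lemma mexp_series: "mexp S (mscale x A) i j = (\<Sum>n. (mpow S A n i j / fact n) * x^n)"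
  unfolding mexp_def by (simp add: mpow_mscale mult.commute)

lemma mexp_deriv:
  assumes "finite S" "j \<in> S"
  shows "((\<lambda>x. mexp S (mscale x A) i j) has_real_derivative
            (\<Sum>k\<in>S. mexp S (mscale x A) i k * A k j)) (at x)"
proof -
  define c where "c = (\<lambda>n. mpow S A n i j / fact n)"
  have d: "((\<lambda>x. \<Sum>n. c n * x^n) has_field_derivative (\<Sum>n. diffs c n * x^n)) (at x)"
    by (rule termdiffs_strong_converges_everywhere) (use mpow_summable[OF assms] in \<open>simp add: c_def\<close>)
  have "diffs c n * x^n = (\<Sum>k\<in>S. (mpow S A n i k / fact n * x^n) * A k j)" for n
  proof -
    have "diffs c n = mpow S A (Suc n) i j / fact n"
    proof -
      have e: "real (Suc n) * (v / fact (Suc n)) = v / (fact n::real)" for v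
        by (simp del: of_nat_Suc)
      show ?thesis unfolding diffs_def c_def e by simp
    qed
    then show ?thesis
      by (simp add: mmult_def sum_distrib_left sum_distrib_right sum_divide_distrib algebra_simps)
  qed
  then have "(\<Sum>n. diffs c n * x^n) = (\<Sum>n. \<Sum>k\<in>S. (mpow S A n i k / fact n * x^n) * A k j)" by simp
  also have "\<dots> = (\<Sum>k\<in>S. \<Sum>n. (mpow S A n i k / fact n * x^n) * A k j)"
    by (rule suminf_sum) (intro summable_mult2 mpow_summable[OF assms(1)])
  also have "\<dots> = (\<Sum>k\<in>S. mexp S (mscale x A) i k * A k j)"
  proof (intro sum.cong refl)
    fix k assume k: "k \<in> S"
    show "(\<Sum>n. (mpow S A n i k / fact n * x^n) * A k j) = mexp S (mscale x A) i k * A k j"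
      unfolding mexp_series using suminf_mult2[OF mpow_summable[OF assms(1) k, of A i x], of "A k j"]
      by simp
  qed
  finally show ?thesis using d by (simp add: c_def mexp_series[abs_def])
qed

lemma mexp_zero_row:
  assumes "i \<in> S" "\<And>d. A i d = 0"
  shows "mexp S A i j = (if i = j then 1 else 0)"
proof -
  have z: "mpow S A (Suc n) i j' = 0" for n j'
  proof (induction n arbitrary: j')
    case 0
    have "(\<Sum>k\<in>S. (if i = k then 1 else 0) * A k j') = (\<Sum>k\<in>S. if i = k then A k j' else 0)"
      by (rule sum.cong) auto
    then show ?case using assms by (simp add: mmult_def, intro sum.neutral, auto)
  next
    case (Suc n) then show ?case by (simp add: mmult_def)
  qed
  have "(\<lambda>n. mpow S A n i j / fact n) = (\<lambda>n. if n = 0 then (if i = j then 1 else 0) else 0)"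
    by (rule ext) (case_tac n, auto simp del: mpow.simps(2) simp: z)
  then show ?thesis unfolding mexp_def using sums_single[of 0 "\<lambda>_. if i = j then 1 else 0::real"]
    by (simp add: sums_iff)
qed




definition vv :: "(nat \<Rightarrow> real) \<Rightarrow> st \<Rightarrow> real" where
  "vv w c = (case c of Ost k \<Rightarrow> w k | Ast k \<Rightarrow> - w k | _ \<Rightarrow> 0)"

lemma finite_Estates: "finite (Estates p)" by (simp add: Estates_def)

lemma sum_Estates: "(\<Sum>c\<in>Estates p. f c) = (\<Sum>k\<in>{1..p}. f (Ost k)) + (\<Sum>k\<in>{1..p}. f (Ast k))"
proof -
  have "(\<Sum>c\<in>Estates p. f c) = sum f (Ost ` {1..p}) + sum f (Ast ` {1..p})"
    unfolding Estates_def by (rule sum.union_disjoint) auto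
  also have "\<dots> = (\<Sum>k\<in>{1..p}. f (Ost k)) + (\<Sum>k\<in>{1..p}. f (Ast k))"
    by (simp add: sum.reindex inj_on_def)
  finally show ?thesis .
qed

lemma Tpm: "Tplus T j k - Tminus T j k = T j k"
  by (simp add: Tplus_def Tminus_def max_def)

lemma Tpm2: "x * (Tplus T j k - c) * w + x * Tminus T j k * (- w) = x * (T j k - c) * w"
proof -
  have "x * (Tplus T j k - c) * w + x * Tminus T j k * (- w) = x * ((Tplus T j k - Tminus T j k) - c) * w"
    by (simp add: algebra_simps)
  then show ?thesis by (simp only: Tpm)
qed

lemma Tpm3: "x * Tminus T j k * w + x * (Tplus T j k - c) * (- w) = - (x * (T j k - c) * w)"
  using Tpm2[of x T j k c w] by (simp add: algebra_simps)

lemma Gv: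
  assumes "d \<in> Estates p"
  shows "(\<Sum>c\<in>Estates p. mscale x (Gmat T s l) d c * vv w c)
     = vv (\<lambda>j. \<Sum>m\<in>{1..p}. mscale x (\<lambda>a b. T a b - (if a = b then l else 0)) j m * w m) d"
proof -
  obtain j where "d = Ost j \<or> d = Ast j" using assms unfolding Estates_def by auto
  then show ?thesis
  proof
    assume d: "d = Ost j"
    have "(\<Sum>c\<in>Estates p. mscale x (Gmat T s l) d c * vv w c)
       = (\<Sum>k\<in>{1..p}. x * (Tplus T j k - (if j = k then l else 0)) * w k + x * Tminus T j k * (- w k))"
      unfolding sum_Estates sum.distrib by (simp add: d mscale_def vv_def)
    also have "\<dots> = (\<Sum>k\<in>{1..p}. x * (T j k - (if j = k then l else 0)) * w k)"
      by (rule sum.cong, rule refl, rule Tpm2)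
    finally show ?thesis by (simp add: d vv_def mscale_def mult.assoc)
  next
    assume d: "d = Ast j"
    have "(\<Sum>c\<in>Estates p. mscale x (Gmat T s l) d c * vv w c)
       = (\<Sum>k\<in>{1..p}. x * Tminus T j k * w k + x * (Tplus T j k - (if j = k then l else 0)) * (- w k))"
      unfolding sum_Estates sum.distrib by (simp add: d mscale_def vv_def)
    also have "\<dots> = - (\<Sum>k\<in>{1..p}. x * (T j k - (if j = k then l else 0)) * w k)"
      unfolding sum_negf[symmetric]
      by (rule sum.cong, rule refl, rule Tpm3)
    finally show ?thesis by (simp add: d vv_def mscale_def mult.assoc)
  qed
qed

lemma mpow_G:
  assumes "a \<in> Estates p"
  shows "(\<Sum>c\<in>Estates p. mpow (Estates p) (mscale x (Gmat T s l)) n a c * vv w c)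
     = vv (\<lambda>i. \<Sum>k\<in>{1..p}. mpow {1..p} (mscale x (\<lambda>a b. T a b - (if a = b then l else 0))) n i k * w k) a"
proof (induction n arbitrary: w)
  case 0
  have e1: "(\<Sum>c\<in>Estates p. (if a = c then 1 else 0) * vv w c) = vv w a"
  proof -
    have "(\<Sum>c\<in>Estates p. (if a = c then 1 else 0) * vv w c) = (\<Sum>c\<in>Estates p. if a = c then vv w c else 0)"
      by (rule sum.cong) auto
    also have "\<dots> = vv w a" using assms finite_Estates[of p] by (simp add: sum.delta)
    finally show ?thesis .
  qed
  have e2: "(\<Sum>k\<in>{1..p}. (if i = k then 1 else 0) * w k) = w i" if "i \<in> {1..p}" for i
  proof -
    have "(\<Sum>k\<in>{1..p}. (if i = k then 1 else 0) * w k) = (\<Sum>k\<in>{1..p}. if i = k then w k else 0)"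
      by (rule sum.cong) auto
    also have "\<dots> = w i" using that by (simp add: sum.delta)
    finally show ?thesis .
  qed
  obtain j where j: "j \<in> {1..p}" "a = Ost j \<or> a = Ast j" using assms unfolding Estates_def by auto
  show ?case using j e2[OF j(1)] unfolding mpow.simps e1 by (auto simp: vv_def)
next
  case (Suc n)
  define G where "G = mscale x (Gmat T s l)"
  define Tx where "Tx = mscale x (\<lambda>a b. T a b - (if a = b then l else 0))"
  have "(\<Sum>c\<in>Estates p. mpow (Estates p) G (Suc n) a c * vv w c)
      = (\<Sum>d\<in>Estates p. mpow (Estates p) G n a d * (\<Sum>c\<in>Estates p. G d c * vv w c))"
    by (simp only: mpow.simps mmult_def sum_distrib_right sum_distrib_left mult.assoc) (rule sum.swap)
  also have "\<dots> = (\<Sum>d\<in>Estates p. mpow (Estates p) G n a d * vv (\<lambda>j. \<Sum>m\<in>{1..p}. Tx j m * w m) d)"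
    by (rule sum.cong, rule refl) (simp add: G_def Tx_def Gv)
  also have "\<dots> = vv (\<lambda>i. \<Sum>k\<in>{1..p}. mpow {1..p} Tx n i k * (\<Sum>m\<in>{1..p}. Tx k m * w m)) a"
    using Suc.IH unfolding G_def Tx_def by simp
  also have "(\<lambda>i. \<Sum>k\<in>{1..p}. mpow {1..p} Tx n i k * (\<Sum>m\<in>{1..p}. Tx k m * w m))
      = (\<lambda>i. \<Sum>k\<in>{1..p}. mpow {1..p} Tx (Suc n) i k * w k)"
    by (simp only: mpow.simps mmult_def sum_distrib_right sum_distrib_left mult.assoc) (rule ext, rule sum.swap)
  finally show ?case unfolding G_def Tx_def .
qed

lemma mexp_vec:
  assumes "finite S"
  shows "(\<Sum>c\<in>S. mexp S A a c * w c) = (\<Sum>n. (\<Sum>c\<in>S. mpow S A n a c * w c) / fact n)"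
proof -
  have sm: "summable (\<lambda>n. mpow S A n a c / fact n)" if "c \<in> S" for c
    using mpow_summable[OF assms that, of A a 1] by simp
  have "(\<Sum>c\<in>S. mexp S A a c * w c) = (\<Sum>c\<in>S. \<Sum>n. mpow S A n a c / fact n * w c)"
    unfolding mexp_def by (intro sum.cong refl suminf_mult2 sm)
  also have "\<dots> = (\<Sum>n. \<Sum>c\<in>S. mpow S A n a c / fact n * w c)"
    by (rule suminf_sum[symmetric]) (intro summable_mult2 sm)
  finally show ?thesis by (simp add: sum_divide_distrib)
qed

lemma mexp_vec_summable:
  assumes "finite S"
  shows "summable (\<lambda>n. (\<Sum>c\<in>S. mpow S A n a c * w c) / fact n)"
proof -
  have "summable (\<lambda>n. \<Sum>c\<in>S. mpow S A n a c / fact n * w c)"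
    by (intro summable_sum summable_mult2) (use mpow_summable[OF assms, of _ A a 1] in simp)
  then show ?thesis by (simp add: sum_divide_distrib)
qed

lemma conj12:
  assumes "i \<in> {1..p}"
  shows "(\<Sum>c\<in>Estates p. mexp (Estates p) (mscale x (Gmat T s l)) (Ost i) c * vv w c)
        = (\<Sum>k\<in>{1..p}. mexp {1..p} (mscale x (\<lambda>a b. T a b - (if a = b then l else 0))) i k * w k)"
    and "(\<Sum>c\<in>Estates p. mexp (Estates p) (mscale x (Gmat T s l)) (Ast i) c * vv w c)
        = - (\<Sum>k\<in>{1..p}. mexp {1..p} (mscale x (\<lambda>a b. T a b - (if a = b then l else 0))) i k * w k)"
proof -
  have o: "Ost i \<in> Estates p" "Ast i \<in> Estates p" using assms by (auto simp: Estates_def)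
  show "(\<Sum>c\<in>Estates p. mexp (Estates p) (mscale x (Gmat T s l)) (Ost i) c * vv w c)
        = (\<Sum>k\<in>{1..p}. mexp {1..p} (mscale x (\<lambda>a b. T a b - (if a = b then l else 0))) i k * w k)"
    unfolding mexp_vec[OF finite_Estates] mexp_vec[OF finite_atLeastAtMost] mpow_G[OF o(1)]
    by (simp add: vv_def)
  show "(\<Sum>c\<in>Estates p. mexp (Estates p) (mscale x (Gmat T s l)) (Ast i) c * vv w c)
        = - (\<Sum>k\<in>{1..p}. mexp {1..p} (mscale x (\<lambda>a b. T a b - (if a = b then l else 0))) i k * w k)"
    unfolding mexp_vec[OF finite_Estates] mexp_vec[OF finite_atLeastAtMost] mpow_G[OF o(2)]
    by (simp add: vv_def suminf_minus[OF mexp_vec_summable[OF finite_atLeastAtMost]])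
qed




lemma all_le1: "(\<forall>m::nat\<le>Suc 0. Q m) \<longleftrightarrow> Q 0 \<and> Q 1"
  by (auto simp: le_Suc_eq)
lemma all_le2: "(\<forall>m::nat\<le>Suc (Suc 0). Q m) \<longleftrightarrow> Q 0 \<and> Q 1 \<and> Q 2"
  by (auto simp: le_Suc_eq numeral_2_eq_2)

declare zero_le_of_rat_iff[simp del] zero_less_of_rat_iff[simp del] of_rat_less_0_iff[simp del]
  of_rat_le_0_iff[simp del]

locale absorb =
  fixes S :: "st set" and Q :: "st \<Rightarrow> st \<Rightarrow> real" and P :: "'w measure"
    and X :: "'w \<Rightarrow> real \<Rightarrow> st" and a :: st and E :: "st set"
  assumes finS: "finite S" and ct: "ctmc S Q P X a" and ES: "E \<subseteq> S" and aE: "a \<in> E"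
    and absorb: "\<And>c d. c \<in> S - E \<Longrightarrow> Q c d = 0"
begin

lemma ps: "prob_space P" using ct unfolding ctmc_def by blast

sublocale prob_space P by (rule ps)

lemma aS: "a \<in> S" using aE ES by auto

lemma Xm: "0 \<le> t \<Longrightarrow> {\<omega>\<in>space P. X \<omega> t \<in> A} \<in> sets P"
proof -
  assume "0 \<le> t"
  then have "(\<lambda>\<omega>. X \<omega> t) \<in> measurable P (count_space UNIV)" using ct unfolding ctmc_def by blast
  from measurable_sets[OF this, of A] show ?thesis by (simp add: vimage_def Int_def conj_commute)
qed

lemma Xeq: "0 \<le> t \<Longrightarrow> {\<omega>\<in>space P. X \<omega> t = c} \<in> sets P"
  using Xm[of t "{c}"] by simp

lemma Xpred: "0 \<le> t \<Longrightarrow> Measurable.pred P (\<lambda>\<omega>. X \<omega> t \<in> A)"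
  using Xm unfolding pred_def by blast

lemma path: "\<omega> \<in> space P \<Longrightarrow> 0 \<le> t \<Longrightarrow> X \<omega> t \<in> S \<and> (\<exists>\<epsilon>>0. \<forall>u. t \<le> u \<and> u < t + \<epsilon> \<longrightarrow> X \<omega> u = X \<omega> t)"
  using ct unfolding ctmc_def by blast

lemma fdd: "t 0 = 0 \<Longrightarrow> (\<forall>m<n. t m \<le> t (Suc m)) \<Longrightarrow> (\<forall>m\<le>n. k m \<in> S) \<Longrightarrow>
        measure P {\<omega>\<in>space P. \<forall>m\<le>n. X \<omega> (t m) = k m}
          = (if k 0 = a then 1 else 0) *
            (\<Prod>m<n. mexp S (mscale (t (Suc m) - t m) Q) (k m) (k (Suc m)))"
  using ct unfolding ctmc_def by blast

lemma fdd0: "k0 \<in> S \<Longrightarrow> measure P {\<omega>\<in>space P. X \<omega> 0 = k0} = (if k0 = a then 1 else 0)"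
  using fdd[of "\<lambda>_. 0" 0 "\<lambda>_. k0"] by simp

lemma fdd1: "0 \<le> x \<Longrightarrow> k0 \<in> S \<Longrightarrow> k1 \<in> S \<Longrightarrow>
   measure P {\<omega>\<in>space P. X \<omega> 0 = k0 \<and> X \<omega> x = k1} = (if k0 = a then 1 else 0) * mexp S (mscale x Q) k0 k1"
  using fdd[of "\<lambda>m. if m = 0 then 0 else x" 1 "\<lambda>m. if m = 0 then k0 else k1"]
  by (simp add: all_le1)

lemma fdd2: "0 \<le> q \<Longrightarrow> q \<le> r \<Longrightarrow> k0 \<in> S \<Longrightarrow> k1 \<in> S \<Longrightarrow> k2 \<in> S \<Longrightarrow>
   measure P {\<omega>\<in>space P. X \<omega> 0 = k0 \<and> X \<omega> q = k1 \<and> X \<omega> r = k2}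
     = (if k0 = a then 1 else 0) * mexp S (mscale q Q) k0 k1 * mexp S (mscale (r - q) Q) k1 k2"
  using fdd[of "\<lambda>m. if m = 0 then 0 else if m = 1 then q else r" 2 "\<lambda>m. if m = 0 then k0 else if m = 1 then k1 else k2"]
  proof -
  assume "0 \<le> q" "q \<le> r" "k0 \<in> S" "k1 \<in> S" "k2 \<in> S"
  moreover have "{\<omega>\<in>space P. \<forall>m\<le>Suc (Suc 0). X \<omega> ((\<lambda>m. if m = 0 then 0 else if m = 1 then q else r) m)
       = (\<lambda>m. if m = 0 then k0 else if m = 1 then k1 else k2) m}
     = {\<omega>\<in>space P. X \<omega> 0 = k0 \<and> X \<omega> q = k1 \<and> X \<omega> r = k2}"
    unfolding all_le2 by auto
  ultimately show ?thesis
    using fdd[of "\<lambda>m. if m = 0 then 0 else if m = 1 then q else r" "Suc (Suc 0)" "\<lambda>m. if m = 0 then k0 else if m = 1 then k1 else k2"]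
    by (simp add: lessThan_Suc all_le2)
qed

lemma AE0: "AE \<omega> in P. X \<omega> 0 = a"
proof -
  have "prob {\<omega>\<in>space P. X \<omega> 0 = a} = 1" using fdd0[OF aS] by simp
  from AE_prob_1[OF this] show ?thesis by auto
qed

lemma mexp_abs: "c \<in> S - E \<Longrightarrow> mexp S (mscale t Q) c d = (if c = d then 1 else 0)"
  by (rule mexp_zero_row) (auto simp: mscale_def absorb)

lemma AEabs:
  assumes "0 \<le> q" "q \<le> r" "c \<in> S - E"
  shows "AE \<omega> in P. X \<omega> q = c \<longrightarrow> X \<omega> r = c"
proof -
  have "AE \<omega> in P. \<forall>d\<in>S - {c}. \<not> (X \<omega> 0 = a \<and> X \<omega> q = c \<and> X \<omega> r = d)"
  proof (rule AE_finite_allI)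
    show "finite (S - {c})" using finS by simp
    fix d assume d: "d \<in> S - {c}"
    let ?Z = "{\<omega>\<in>space P. X \<omega> 0 = a \<and> X \<omega> q = c \<and> X \<omega> r = d}"
    have Zs: "?Z \<in> sets P"
    proof -
      have "?Z = {\<omega>\<in>space P. X \<omega> 0 \<in> {a}} \<inter> {\<omega>\<in>space P. X \<omega> q \<in> {c}} \<inter> {\<omega>\<in>space P. X \<omega> r \<in> {d}}" by auto
      then show ?thesis using Xeq[of 0 a] Xeq[of q c] Xeq[of r d] assms by auto
    qed
    have "measure P ?Z = 0" using fdd2[OF assms(1,2) aS, of c d] assms d mexp_abs[OF assms(3)] by auto
    then have "?Z \<in> null_sets P" using Zs by (simp add: emeasure_eq_measure null_setsI)
    from AE_not_in[OF this] show "AE \<omega> in P. \<not> (X \<omega> 0 = a \<and> X \<omega> q = c \<and> X \<omega> r = d)" by auto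
  qed
  moreover have "AE \<omega> in P. X \<omega> r \<in> S" using path assms by (intro AE_I2) auto
  ultimately show ?thesis using AE0 by eventually_elim auto
qed

definition good where
  "good \<omega> \<longleftrightarrow> (\<forall>q r::rat. 0 \<le> (of_rat q::real) \<longrightarrow> of_rat q \<le> (of_rat r::real) \<longrightarrow>
        (\<forall>c\<in>S - E. X \<omega> (of_rat q) = c \<longrightarrow> X \<omega> (of_rat r) = c))"

lemma AEgood: "AE \<omega> in P. good \<omega>"
proof -
  have "AE \<omega> in P. \<forall>q r::rat. 0 \<le> (of_rat q::real) \<longrightarrow> of_rat q \<le> (of_rat r::real) \<longrightarrow>
        (\<forall>c\<in>S - E. X \<omega> (of_rat q) = c \<longrightarrow> X \<omega> (of_rat r) = c)"
    unfolding AE_all_countable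
  proof (intro allI)
    fix q r :: rat
    show "AE \<omega> in P. 0 \<le> (of_rat q::real) \<longrightarrow> of_rat q \<le> (of_rat r::real) \<longrightarrow>
        (\<forall>c\<in>S - E. X \<omega> (of_rat q) = c \<longrightarrow> X \<omega> (of_rat r) = c)"
    proof (cases "0 \<le> (of_rat q::real) \<and> of_rat q \<le> (of_rat r::real)")
      case True
      have "AE \<omega> in P. \<forall>c\<in>S - E. X \<omega> (of_rat q) = c \<longrightarrow> X \<omega> (of_rat r) = c"
        using finS True by (intro AE_finite_allI AEabs) auto
      then show ?thesis by auto
    qed auto
  qed
  then show ?thesis unfolding good_def .
qed

definition Ex where "Ex \<omega> \<longleftrightarrow> (\<exists>x\<ge>0. X \<omega> x \<notin> E)"
definition tau where "tau \<omega> = Inf {x. 0 \<le> x \<and> X \<omega> x \<notin> E}"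

lemma PL1:
  assumes "\<omega> \<in> space P" "Ex \<omega>"
  shows "0 \<le> tau \<omega> \<and> X \<omega> (tau \<omega>) \<notin> E"
proof -
  let ?A = "{x. 0 \<le> x \<and> X \<omega> x \<notin> E}"
  have ne: "?A \<noteq> {}" using assms(2) unfolding Ex_def by auto
  have bdd: "bdd_below ?A" by (rule bdd_belowI[of _ 0]) auto
  have t0: "0 \<le> tau \<omega>" unfolding tau_def by (rule cInf_greatest[OF ne]) auto
  moreover have "X \<omega> (tau \<omega>) \<notin> E"
  proof
    assume inE: "X \<omega> (tau \<omega>) \<in> E"
    obtain \<epsilon> where e: "\<epsilon> > 0" "\<And>u. tau \<omega> \<le> u \<and> u < tau \<omega> + \<epsilon> \<Longrightarrow> X \<omega> u = X \<omega> (tau \<omega>)"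
      using path[OF assms(1) t0] by blast
    have "Inf ?A < tau \<omega> + \<epsilon>" using e(1) unfolding tau_def by simp
    then obtain x where x: "x \<in> ?A" "x < tau \<omega> + \<epsilon>" using cInf_less_iff[OF ne bdd] by auto
    have tx: "tau \<omega> \<le> x" unfolding tau_def by (rule cInf_lower[OF x(1) bdd])
    have "X \<omega> x = X \<omega> (tau \<omega>)" using e(2)[of x] x(2) tx by blast
    then show False using x(1) inE by simp
  qed
  ultimately show ?thesis by blast
qed

lemma tau_le: "0 \<le> x \<Longrightarrow> X \<omega> x \<notin> E \<Longrightarrow> tau \<omega> \<le> x"
  unfolding tau_def by (rule cInf_lower) (auto intro: bdd_belowI[of _ 0])

lemma goodD: "good \<omega> \<Longrightarrow> 0 \<le> (of_rat q::real) \<Longrightarrow> (of_rat q::real) \<le> of_rat r \<Longrightarrow> c \<in> S - E \<Longrightarrow>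
   X \<omega> (of_rat q) = c \<Longrightarrow> X \<omega> (of_rat r) = c"
  unfolding good_def by blast

lemma PL2:
  assumes "\<omega> \<in> space P" "good \<omega>" "0 \<le> x" "c \<in> S - E"
  shows "(Ex \<omega> \<and> tau \<omega> \<le> x \<and> X \<omega> (tau \<omega>) = c) \<longleftrightarrow> X \<omega> x = c"
proof
  assume H: "Ex \<omega> \<and> tau \<omega> \<le> x \<and> X \<omega> (tau \<omega>) = c"
  then have t0: "0 \<le> tau \<omega>" using PL1 assms(1) by blast
  obtain \<epsilon> where e: "\<epsilon> > 0" "\<And>u. tau \<omega> \<le> u \<and> u < tau \<omega> + \<epsilon> \<Longrightarrow> X \<omega> u = X \<omega> (tau \<omega>)"
    using path[OF assms(1) t0] by blast
  obtain \<delta> where d: "\<delta> > 0" "\<And>u. x \<le> u \<and> u < x + \<delta> \<Longrightarrow> X \<omega> u = X \<omega> x"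
    using path[OF assms(1) assms(3)] by blast
  obtain r :: rat where r: "x < of_rat r" "of_rat r < x + \<delta>" using of_rat_dense[of x "x + \<delta>"] d(1) by auto
  obtain q :: rat where q: "tau \<omega> < of_rat q" "of_rat q < min (tau \<omega> + \<epsilon>) (of_rat r)"
    using of_rat_dense[of "tau \<omega>" "min (tau \<omega> + \<epsilon>) (of_rat r)"] e(1) r H by auto
  have "X \<omega> (of_rat q) = c" using e(2)[of "of_rat q"] q H by auto
  moreover have "0 \<le> (of_rat q::real)" using q t0 by linarith
  ultimately have "X \<omega> (of_rat r) = c" using goodD[OF assms(2), of q r c] assms(4) q t0 by auto
  then show "X \<omega> x = c" using d(2)[of "of_rat r"] r by auto
next
  assume H: "X \<omega> x = c"
  then have Ex: "Ex \<omega>" using assms(3,4) unfolding Ex_def by auto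
  have tx: "tau \<omega> \<le> x" using tau_le[OF assms(3)] H assms(4) by auto
  from PL1[OF assms(1) Ex] have t0: "0 \<le> tau \<omega>" and nE: "X \<omega> (tau \<omega>) \<notin> E" by auto
  let ?d = "X \<omega> (tau \<omega>)"
  have dS: "?d \<in> S - E" using path[OF assms(1) t0] nE by auto
  have "?d = c"
  proof (cases "tau \<omega> = x")
    case True then show ?thesis using H by simp
  next
    case False
    then have lt: "tau \<omega> < x" using tx by auto
    obtain \<epsilon> where e: "\<epsilon> > 0" "\<And>u. tau \<omega> \<le> u \<and> u < tau \<omega> + \<epsilon> \<Longrightarrow> X \<omega> u = X \<omega> (tau \<omega>)"
      using path[OF assms(1) t0] by blast
    obtain \<delta> where d: "\<delta> > 0" "\<And>u. x \<le> u \<and> u < x + \<delta> \<Longrightarrow> X \<omega> u = X \<omega> x"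
      using path[OF assms(1) assms(3)] by blast
    obtain r :: rat where r: "x < of_rat r" "of_rat r < x + \<delta>" using of_rat_dense[of x "x + \<delta>"] d(1) by auto
    obtain q :: rat where q: "tau \<omega> < of_rat q" "of_rat q < min (tau \<omega> + \<epsilon>) x"
      using of_rat_dense[of "tau \<omega>" "min (tau \<omega> + \<epsilon>) x"] e(1) lt by auto
    have "X \<omega> (of_rat q) = ?d" using e(2)[of "of_rat q"] q by auto
    moreover have "0 \<le> (of_rat q::real)" using q t0 by linarith
    ultimately have "X \<omega> (of_rat r) = ?d" using goodD[OF assms(2), of q r ?d] dS q r t0 by auto
    moreover have "X \<omega> (of_rat r) = c" using d(2)[of "of_rat r"] r H by auto
    ultimately show ?thesis by simp
  qed
  then show "Ex \<omega> \<and> tau \<omega> \<le> x \<and> X \<omega> (tau \<omega>) = c" using Ex tx by simp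
qed


lemma Ex_rat: "\<omega> \<in> space P \<Longrightarrow> Ex \<omega> \<longleftrightarrow> (\<exists>q::rat. 0 \<le> (of_rat q::real) \<and> X \<omega> (of_rat q) \<notin> E)"
proof
  assume sp: "\<omega> \<in> space P" and "Ex \<omega>"
  then obtain x where x: "0 \<le> x" "X \<omega> x \<notin> E" unfolding Ex_def by auto
  obtain \<delta> where d: "\<delta> > 0" "\<And>u. x \<le> u \<and> u < x + \<delta> \<Longrightarrow> X \<omega> u = X \<omega> x"
    using path[OF sp x(1)] by blast
  obtain q :: rat where q: "x < of_rat q" "of_rat q < x + \<delta>" using of_rat_dense[of x "x + \<delta>"] d(1) by auto
  have "0 \<le> (of_rat q::real)" using q x by linarith
  then show "\<exists>q::rat. 0 \<le> (of_rat q::real) \<and> X \<omega> (of_rat q) \<notin> E"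
    using d(2)[of "of_rat q"] x q by (intro exI[of _ q] conjI) auto
next
  assume "\<exists>q::rat. 0 \<le> (of_rat q::real) \<and> X \<omega> (of_rat q) \<notin> E"
  then show "Ex \<omega>" unfolding Ex_def by blast
qed

lemma tau_less:
  assumes sp: "\<omega> \<in> space P"
  shows "tau \<omega> < y \<longleftrightarrow> (\<exists>q::rat. 0 \<le> (of_rat q::real) \<and> of_rat q < y \<and> X \<omega> (of_rat q) \<notin> E)
            \<or> (\<not> (\<exists>q::rat. 0 \<le> (of_rat q::real) \<and> X \<omega> (of_rat q) \<notin> E) \<and> Inf ({}::real set) < y)"
proof (cases "Ex \<omega>")
  case False
  have e: "tau \<omega> = Inf ({}::real set)" unfolding tau_def
    by (rule arg_cong[where f=Inf]) (use False in \<open>auto simp: Ex_def\<close>)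
  show ?thesis using False Ex_rat[OF sp] unfolding e by auto
next
  case True
  let ?A = "{x. 0 \<le> x \<and> X \<omega> x \<notin> E}"
  have ne: "?A \<noteq> {}" using True unfolding Ex_def by auto
  have bdd: "bdd_below ?A" by (rule bdd_belowI[of _ 0]) auto
  have "tau \<omega> < y \<longleftrightarrow> (\<exists>q::rat. 0 \<le> (of_rat q::real) \<and> of_rat q < y \<and> X \<omega> (of_rat q) \<notin> E)"
  proof
    assume "tau \<omega> < y"
    then obtain x where x: "x \<in> ?A" "x < y" using cInf_less_iff[OF ne bdd] unfolding tau_def by auto
    have x0: "0 \<le> x" using x by auto
    obtain \<delta> where d: "\<delta> > 0" "\<And>u. x \<le> u \<and> u < x + \<delta> \<Longrightarrow> X \<omega> u = X \<omega> x"
      using path[OF sp] x by blast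
    obtain q :: rat where q: "x < of_rat q" "of_rat q < min (x + \<delta>) y"
      using of_rat_dense[of x "min (x + \<delta>) y"] d(1) x by auto
    have "0 \<le> (of_rat q::real)" using q x0 by linarith
    then show "\<exists>q::rat. 0 \<le> (of_rat q::real) \<and> of_rat q < y \<and> X \<omega> (of_rat q) \<notin> E"
      using d(2)[of "of_rat q"] x q by (intro exI[of _ q] conjI) auto
  next
    assume "\<exists>q::rat. 0 \<le> (of_rat q::real) \<and> of_rat q < y \<and> X \<omega> (of_rat q) \<notin> E"
    then obtain q :: rat where "0 \<le> (of_rat q::real)" "of_rat q < y" "X \<omega> (of_rat q) \<notin> E" by auto
    then show "tau \<omega> < y" using tau_le[of "of_rat q" \<omega>] by auto
  qed
  then show ?thesis using True Ex_rat[OF sp] by auto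
qed

lemma predXn: assumes "K \<Longrightarrow> 0 \<le> t" shows "Measurable.pred P (\<lambda>w. K \<and> X w t \<notin> E)"
  by (rule pred_intros_conj1') (use Xpred[where t=t and A="- E"] assms in auto)

lemma pred_Ex: "Measurable.pred P (\<lambda>w. \<exists>q::rat. 0 \<le> (of_rat q::real) \<and> X w (of_rat q) \<notin> E)"
  by (intro pred_intros_countable predXn) auto

lemma tau_meas: "tau \<in> borel_measurable P"
  unfolding borel_measurable_iff_less
proof
  fix y :: real
  have "{w \<in> space P. tau w < y} = {w \<in> space P.
     (\<exists>q::rat. (0 \<le> (of_rat q::real) \<and> of_rat q < y) \<and> X w (of_rat q) \<notin> E)
            \<or> (\<not> (\<exists>q::rat. 0 \<le> (of_rat q::real) \<and> X w (of_rat q) \<notin> E) \<and> Inf ({}::real set) < y)}"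
    using tau_less by (auto simp: conj_assoc)
  also have "\<dots> \<in> sets P" unfolding pred_def[symmetric]
    by (intro pred_intros_logic pred_intros_conj2' pred_intros_countable predXn pred_Ex) auto
  finally show "{w \<in> space P. tau w < y} \<in> sets P" .
qed

lemma XT:
  assumes sp: "\<omega> \<in> space P" and Ex: "Ex \<omega>"
  shows "X \<omega> (tau \<omega>) = c \<longleftrightarrow> (\<exists>n::nat. \<forall>q::rat. 0 < (of_rat q::real) \<longrightarrow> tau \<omega> < of_rat q \<longrightarrow>
            of_rat q < tau \<omega> + inverse (real (Suc n)) \<longrightarrow> X \<omega> (of_rat q) = c)"
proof -
  have t0: "0 \<le> tau \<omega>" using PL1[OF sp Ex] by auto
  obtain \<epsilon> where e: "\<epsilon> > 0" "\<And>u. tau \<omega> \<le> u \<and> u < tau \<omega> + \<epsilon> \<Longrightarrow> X \<omega> u = X \<omega> (tau \<omega>)"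
    using path[OF sp t0] by blast
  show ?thesis
  proof
    assume c: "X \<omega> (tau \<omega>) = c"
    obtain n where n: "inverse (real (Suc n)) < \<epsilon>" using reals_Archimedean[OF e(1)] by auto
    show "\<exists>n::nat. \<forall>q::rat. 0 < (of_rat q::real) \<longrightarrow> tau \<omega> < of_rat q \<longrightarrow>
            of_rat q < tau \<omega> + inverse (real (Suc n)) \<longrightarrow> X \<omega> (of_rat q) = c"
      using e(2) n c by (intro exI[of _ n]) auto
  next
    assume "\<exists>n::nat. \<forall>q::rat. 0 < (of_rat q::real) \<longrightarrow> tau \<omega> < of_rat q \<longrightarrow>
            of_rat q < tau \<omega> + inverse (real (Suc n)) \<longrightarrow> X \<omega> (of_rat q) = c"
    then obtain n where n: "\<And>q::rat. 0 < (of_rat q::real) \<Longrightarrow> tau \<omega> < of_rat q \<Longrightarrow>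
            of_rat q < tau \<omega> + inverse (real (Suc n)) \<Longrightarrow> X \<omega> (of_rat q) = c" by auto
    have "0 < min \<epsilon> (inverse (real (Suc n)))" using e(1) by simp
    then obtain q :: rat where q: "tau \<omega> < of_rat q" "of_rat q < tau \<omega> + min \<epsilon> (inverse (real (Suc n)))"
      using of_rat_dense[of "tau \<omega>" "tau \<omega> + min \<epsilon> (inverse (real (Suc n)))"] by auto
    have "0 < (of_rat q::real)" using q t0 by linarith
    moreover have "of_rat q < tau \<omega> + inverse (real (Suc n))" using q by linarith
    ultimately have "X \<omega> (of_rat q) = c" using n[of q] q by blast
    moreover have "X \<omega> (of_rat q) = X \<omega> (tau \<omega>)" using e(2)[of "of_rat q"] q by auto
    ultimately show "X \<omega> (tau \<omega>) = c" by simp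
  qed
qed

definition Ev where "Ev c = {\<omega>\<in>space P. Ex \<omega> \<and> X \<omega> (tau \<omega>) = c}"

lemma Ev_sets: "Ev c \<in> sets P"
proof -
  have "Ev c = {\<omega>\<in>space P. (\<exists>q::rat. 0 \<le> (of_rat q::real) \<and> X \<omega> (of_rat q) \<notin> E) \<and>
      (\<exists>n::nat. \<forall>q::rat. 0 < (of_rat q::real) \<longrightarrow> (tau \<omega> < of_rat q \<longrightarrow>
            of_rat q < tau \<omega> + inverse (real (Suc n)) \<longrightarrow> X \<omega> (of_rat q) \<in> {c}))}"
    unfolding Ev_def
  proof (rule Collect_cong, rule conj_cong[OF refl])
    fix \<omega> assume sp: "\<omega> \<in> space P"
    show "(Ex \<omega> \<and> X \<omega> (tau \<omega>) = c) = ((\<exists>q::rat. 0 \<le> (of_rat q::real) \<and> X \<omega> (of_rat q) \<notin> E) \<and>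
      (\<exists>n::nat. \<forall>q::rat. 0 < (of_rat q::real) \<longrightarrow> (tau \<omega> < of_rat q \<longrightarrow>
            of_rat q < tau \<omega> + inverse (real (Suc n)) \<longrightarrow> X \<omega> (of_rat q) \<in> {c})))"
    proof (cases "Ex \<omega>")
      case True
      then show ?thesis using XT[OF sp True, of c] Ex_rat[OF sp] by simp
    next
      case False
      then show ?thesis using Ex_rat[OF sp] by blast
    qed
  qed
  also have "\<dots> \<in> sets P"
  proof -
    have m: "Measurable.pred P (\<lambda>\<omega>. tau \<omega> < r)" for r unfolding pred_def by (intro borel_measurable_less tau_meas borel_measurable_const)
    have m2: "Measurable.pred P (\<lambda>\<omega>. r < tau \<omega> + z)" for r z unfolding pred_def by (intro borel_measurable_less borel_measurable_add tau_meas borel_measurable_const)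
    have m3: "Measurable.pred P (\<lambda>\<omega>. 0 < (of_rat q::real) \<longrightarrow> (tau \<omega> < of_rat q \<longrightarrow>
            of_rat q < tau \<omega> + inverse (real (Suc n)) \<longrightarrow> X \<omega> (of_rat q) \<in> {c}))" for n q
    proof (rule pred_intros_imp')
      assume "0 < (of_rat q::real)"
      then have "Measurable.pred P (\<lambda>\<omega>. X \<omega> (of_rat q) \<in> {c})" by (intro Xpred) auto
      then show "Measurable.pred P (\<lambda>\<omega>. tau \<omega> < of_rat q \<longrightarrow>
            of_rat q < tau \<omega> + inverse (real (Suc n)) \<longrightarrow> X \<omega> (of_rat q) \<in> {c})"
        by (rule pred_intros_logic(4)[OF m pred_intros_logic(4)[OF m2]])
    qed
    show ?thesis
      apply (rule predE)
      apply (rule pred_intros_logic(3))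
       apply (rule pred_Ex)
      apply (rule pred_intros_countable(2))
      apply (rule pred_intros_countable(1))
      apply (rule m3)
      done
  qed
  finally show ?thesis .
qed

lemma TB_sets: "B \<in> sets borel \<Longrightarrow> {\<omega>\<in>space P. tau \<omega> \<in> B} \<in> sets P"
  using measurable_sets[OF tau_meas, of B] by (simp add: vimage_def Int_def conj_commute)

lemma h_decomp:
  assumes sp: "\<omega> \<in> space P" and B: "B \<subseteq> {0..}" and DO: "DeltaO \<notin> E" and DA: "DeltaA \<notin> E"
  shows "indicator B (tau \<omega>) * beta (X \<omega> (tau \<omega>))
     = indicator (Ev DeltaO \<inter> {\<omega>\<in>space P. tau \<omega> \<in> B}) \<omega> - indicator (Ev DeltaA \<inter> {\<omega>\<in>space P. tau \<omega> \<in> B}) \<omega>"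
proof (cases "Ex \<omega>")
  case True
  then show ?thesis using sp unfolding Ev_def
    by (cases "X \<omega> (tau \<omega>)") (auto simp: indicator_def)
next
  case False
  have "indicator B (tau \<omega>) * beta (X \<omega> (tau \<omega>)) = 0"
  proof (cases "0 \<le> tau \<omega>")
    case True
    then have "X \<omega> (tau \<omega>) \<in> E" using False unfolding Ex_def by auto
    then have "X \<omega> (tau \<omega>) \<noteq> DeltaO \<and> X \<omega> (tau \<omega>) \<noteq> DeltaA" using DO DA by auto
    then show ?thesis by (cases "X \<omega> (tau \<omega>)") auto
  next
    case False
    then have "tau \<omega> \<notin> B" using B by auto
    then show ?thesis by simp
  qed
  then show ?thesis using False unfolding Ev_def by simp
qed


definition F where "F c x = mexp S (mscale x Q) a c"
definition g where "g c x = (\<Sum>k\<in>S. mexp S (mscale x Q) a k * Q k c)"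

lemma F_deriv: "c \<in> S \<Longrightarrow> (F c has_real_derivative g c x) (at x)"
  unfolding F_def[abs_def] g_def by (rule mexp_deriv[OF finS])

lemma F0: "c \<in> S - E \<Longrightarrow> F c 0 = 0"
  unfolding F_def using mexp_zero_row[OF aS, of "mscale 0 Q" c] aE by (auto simp: mscale_def)

lemma F_prob: "0 \<le> x \<Longrightarrow> c \<in> S \<Longrightarrow> F c x = measure P {\<omega>\<in>space P. X \<omega> 0 = a \<and> X \<omega> x = c}"
  unfolding F_def using fdd1[of x a c] aS by simp

lemma F_mono:
  assumes c: "c \<in> S - E" and xy: "0 \<le> x" "x \<le> y"
  shows "F c x \<le> F c y"
proof -
  have "F c x = measure P {\<omega>\<in>space P. X \<omega> 0 = a \<and> X \<omega> x = c \<and> X \<omega> y = c}"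
    using fdd2[OF xy aS, of c c] c mexp_abs[OF c, of "y - x" c] by (simp add: F_def)
  also have "\<dots> \<le> measure P {\<omega>\<in>space P. X \<omega> 0 = a \<and> X \<omega> y = c}"
  proof (rule finite_measure_mono)
    have "{\<omega>\<in>space P. X \<omega> 0 = a \<and> X \<omega> y = c} = {\<omega>\<in>space P. X \<omega> 0 = a} \<inter> {\<omega>\<in>space P. X \<omega> y = c}" by auto
    then show "{\<omega>\<in>space P. X \<omega> 0 = a \<and> X \<omega> y = c} \<in> sets P" using Xeq xy by auto
  qed auto
  also have "\<dots> = F c y" using F_prob[of y c] xy c by simp
  finally show ?thesis .
qed

lemma g_nonneg:
  assumes c: "c \<in> S - E" and x: "0 \<le> x"
  shows "0 \<le> g c x"
proof (rule ccontr)
  assume "\<not> 0 \<le> g c x"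
  then have "g c x < 0" by simp
  from has_real_derivative_neg_dec_right[OF F_deriv this] c
  obtain d where d: "d > 0" "\<And>h. h > 0 \<Longrightarrow> h < d \<Longrightarrow> F c x > F c (x + h)" by auto
  have "F c x > F c (x + d/2)" using d by auto
  moreover have "F c x \<le> F c (x + d/2)" using F_mono[OF c x] d by auto
  ultimately show False by simp
qed

lemma g_cont: "continuous_on UNIV (g c)"
proof -
  have "isCont (\<lambda>x. mexp S (mscale x Q) a k) x" if "k \<in> S" for k x
    using mexp_deriv[OF finS that] by (rule DERIV_isCont)
  then have "isCont (g c) x" for x unfolding g_def by (intro isCont_sum ballI isCont_mult) auto
  then show ?thesis by (simp add: continuous_at_imp_continuous_on)
qed

lemma g_borel[measurable]: "g c \<in> borel_measurable borel"
  by (rule borel_measurable_continuous_onI[OF g_cont])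

lemma FTC:
  assumes c: "c \<in> S - E" and x: "0 \<le> x"
  shows "(\<integral>\<^sup>+t. ennreal (g c t) * indicator {0..x} t \<partial>lborel) = ennreal (F c x)"
proof -
  have "(\<integral>\<^sup>+t. ennreal (g c t) * indicator {0..x} t \<partial>lborel) = ennreal (F c x - F c 0)"
    using c x by (intro nn_integral_FTC_Icc g_borel F_deriv g_nonneg) auto
  then show ?thesis using F0[OF c] by simp
qed

definition N1 where "N1 c = distr (density P (indicator (Ev c))) borel tau"
definition N2 where "N2 c = density lborel (\<lambda>t. ennreal (g c t) * indicator {0..} t)"

lemma N1_emeasure:
  assumes A: "A \<in> sets borel"
  shows "emeasure (N1 c) A = emeasure P (Ev c \<inter> {\<omega>\<in>space P. tau \<omega> \<in> A})"
proof -
  have tm: "tau \<in> measurable (density P (indicator (Ev c))) borel" using tau_meas by simp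
  have "emeasure (N1 c) A = emeasure (density P (indicator (Ev c))) (tau -` A \<inter> space P)"
    unfolding N1_def by (simp add: emeasure_distr[OF tm A])
  also have "\<dots> = (\<integral>\<^sup>+ x. indicator (Ev c) x * indicator (tau -` A \<inter> space P) x \<partial>P)"
    by (rule emeasure_density) (use measurable_sets[OF tau_meas A] Ev_sets in auto)
  also have "\<dots> = (\<integral>\<^sup>+ x. indicator (Ev c \<inter> {\<omega>\<in>space P. tau \<omega> \<in> A}) x \<partial>P)"
    by (intro nn_integral_cong) (auto simp: indicator_def)
  also have "\<dots> = emeasure P (Ev c \<inter> {\<omega>\<in>space P. tau \<omega> \<in> A})"
    using Ev_sets TB_sets[OF A] by (intro nn_integral_indicator) auto
  finally show ?thesis .
qed

lemma N2_emeasure: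
  assumes A: "A \<in> sets borel"
  shows "emeasure (N2 c) A = (\<integral>\<^sup>+t. ennreal (g c t) * indicator {0..} t * indicator A t \<partial>lborel)"
  unfolding N2_def by (rule emeasure_density) (use A in auto)

lemma Ev_tau: "\<omega> \<in> Ev c \<Longrightarrow> 0 \<le> tau \<omega>"
  unfolding Ev_def using PL1 by auto

lemma N_eq:
  assumes c: "c \<in> S - E"
  shows "N1 c = N2 c"
proof (rule measure_eqI_generator_eq[where \<Omega>=UNIV and E="range (\<lambda>x::real. {..x})" and A="\<lambda>i. {..real i}"])
  show "Int_stable (range (\<lambda>x::real. {..x}))"
    unfolding Int_stable_def by (auto intro: exI[of _ "min _ _"])
  show "range (\<lambda>x::real. {..x}) \<subseteq> Pow UNIV" by auto
  have sb: "sets borel = sigma_sets UNIV (range (\<lambda>x::real. {..x}))"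
    by (subst borel_eq_atMost) (simp add: sets_measure_of)
  show "sets (N1 c) = sigma_sets UNIV (range (\<lambda>x::real. {..x}))" unfolding N1_def sb[symmetric] by simp
  show "sets (N2 c) = sigma_sets UNIV (range (\<lambda>x::real. {..x}))" unfolding N2_def sb[symmetric] by simp
  show "range (\<lambda>i. {..real i}) \<subseteq> range (\<lambda>x::real. {..x})" by auto
  show "(\<Union>i. {..real i}) = UNIV" by (auto intro: real_arch_simple)
  show "emeasure (N1 c) {..real i} \<noteq> \<infinity>" for i
    by (simp add: N1_emeasure)
  fix Z assume "Z \<in> range (\<lambda>x::real. {..x})"
  then obtain x where Z: "Z = {..x}" by auto
  have e1: "emeasure (N1 c) {..x} = emeasure P (Ev c \<inter> {\<omega>\<in>space P. tau \<omega> \<in> {..x}})"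
    by (rule N1_emeasure) simp
  have e2: "emeasure (N2 c) {..x} = (\<integral>\<^sup>+t. ennreal (g c t) * indicator {0..} t * indicator {..x} t \<partial>lborel)"
    by (rule N2_emeasure) simp
  show "emeasure (N1 c) Z = emeasure (N2 c) Z"
  proof (cases "0 \<le> x")
    case False
    have "Ev c \<inter> {\<omega>\<in>space P. tau \<omega> \<in> {..x}} = {}" using Ev_tau False by force
    moreover have "(\<integral>\<^sup>+t. ennreal (g c t) * indicator {0..} t * indicator {..x} t \<partial>lborel) = 0"
      using False by (intro nn_integral_zero') (auto simp: indicator_def)
    ultimately show ?thesis by (simp only: Z e1 e2 emeasure_empty)
  next
    case True
    have "emeasure P (Ev c \<inter> {\<omega>\<in>space P. tau \<omega> \<in> {..x}}) = emeasure P {\<omega>\<in>space P. X \<omega> 0 = a \<and> X \<omega> x = c}"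
    proof (rule emeasure_eq_AE)
      show "AE \<omega> in P. (\<omega> \<in> Ev c \<inter> {\<omega>\<in>space P. tau \<omega> \<in> {..x}}) = (\<omega> \<in> {\<omega>\<in>space P. X \<omega> 0 = a \<and> X \<omega> x = c})"
        using AE0 AEgood AE_space
      proof eventually_elim
        case (elim \<omega>)
        have "(Ex \<omega> \<and> tau \<omega> \<le> x \<and> X \<omega> (tau \<omega>) = c) \<longleftrightarrow> X \<omega> x = c"
          by (rule PL2[OF elim(3) elim(2) True c])
        then show ?case using elim(1,3) unfolding Ev_def by blast
      qed
      show "Ev c \<inter> {\<omega>\<in>space P. tau \<omega> \<in> {..x}} \<in> sets P"
        using Ev_sets TB_sets[of "{..x}"] by (intro sets.Int) auto
      have "{\<omega>\<in>space P. X \<omega> 0 = a \<and> X \<omega> x = c} = {\<omega>\<in>space P. X \<omega> 0 = a} \<inter> {\<omega>\<in>space P. X \<omega> x = c}" by auto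
      then show "{\<omega>\<in>space P. X \<omega> 0 = a \<and> X \<omega> x = c} \<in> sets P" using Xeq True by auto
    qed
    also have "\<dots> = ennreal (F c x)" using F_prob[OF True, of c] c by (simp add: emeasure_eq_measure)
    also have "\<dots> = (\<integral>\<^sup>+t. ennreal (g c t) * indicator {0..x} t \<partial>lborel)" using FTC[OF c True] by simp
    also have "\<dots> = (\<integral>\<^sup>+t. ennreal (g c t) * indicator {0..} t * indicator {..x} t \<partial>lborel)"
      by (intro nn_integral_cong) (auto simp: indicator_def)
    finally show ?thesis by (simp only: Z e1 e2)
  qed
qed

lemma g_integrable:
  assumes c: "c \<in> S - E"
  shows "integrable lborel (\<lambda>t. g c t * indicator {0..} t)"
proof (rule integrableI_nonneg)
  show "(\<lambda>t. g c t * indicator {0..} t) \<in> borel_measurable lborel" by measurable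
  show "AE t in lborel. 0 \<le> g c t * indicator {0..} t"
    using g_nonneg[OF c] by (intro AE_I2) (auto simp: indicator_def)
  have "(\<integral>\<^sup>+t. ennreal (g c t * indicator {0..} t) \<partial>lborel) = emeasure (N2 c) UNIV"
    by (subst N2_emeasure) (auto intro!: nn_integral_cong simp: indicator_def)
  also have "\<dots> = emeasure (N1 c) UNIV" using N_eq[OF c] by simp
  also have "\<dots> < \<infinity>" by (simp add: N1_emeasure less_top[symmetric])
  finally show "(\<integral>\<^sup>+t. ennreal (g c t * indicator {0..} t) \<partial>lborel) < \<infinity>" .
qed

lemma Ev_measure:
  assumes c: "c \<in> S - E" and B: "B \<in> sets borel" "B \<subseteq> {0..}"
  shows "measure P (Ev c \<inter> {\<omega>\<in>space P. tau \<omega> \<in> B}) = (\<integral>t. indicator B t * g c t \<partial>lborel)"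
proof -
  have hB: "0 \<le> indicator B t * g c t" for t
  proof (cases "t \<in> B")
    case True
    then have "0 \<le> t" using B(2) by auto
    then show ?thesis using g_nonneg[OF c] True by simp
  qed simp
  have int: "integrable lborel (\<lambda>t. indicator B t * g c t)"
  proof -
    have "integrable lborel (\<lambda>t. indicator B t *\<^sub>R (g c t * indicator {0..} t))"
      by (rule integrable_mult_indicator[OF _ g_integrable[OF c]]) (use B in simp)
    moreover have "(\<lambda>t. indicator B t *\<^sub>R (g c t * indicator {0..} t)) = (\<lambda>t. indicator B t * g c t)"
    proof
      fix t show "indicator B t *\<^sub>R (g c t * indicator {0..} t) = indicator B t * g c t"
        using B(2) by (cases "t \<in> B") auto
    qed
    ultimately show ?thesis by simp
  qed
  have s1: "emeasure P (Ev c \<inter> {\<omega>\<in>space P. tau \<omega> \<in> B}) = ennreal (measure P (Ev c \<inter> {\<omega>\<in>space P. tau \<omega> \<in> B}))"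
    by (rule emeasure_eq_measure)
  have s2: "emeasure (N1 c) B = emeasure P (Ev c \<inter> {\<omega>\<in>space P. tau \<omega> \<in> B})"
    by (rule N1_emeasure[OF B(1)])
  have s3: "emeasure (N2 c) B = (\<integral>\<^sup>+t. ennreal (g c t) * indicator {0..} t * indicator B t \<partial>lborel)"
    by (rule N2_emeasure[OF B(1)])
  have s4: "(\<integral>\<^sup>+t. ennreal (g c t) * indicator {0..} t * indicator B t \<partial>lborel)
      = (\<integral>\<^sup>+t. ennreal (indicator B t * g c t) \<partial>lborel)"
  proof (rule nn_integral_cong)
    fix t show "ennreal (g c t) * indicator {0..} t * indicator B t = ennreal (indicator B t * g c t)"
      using B(2) by (cases "t \<in> B") auto
  qed
  have s5: "(\<integral>\<^sup>+t. ennreal (indicator B t * g c t) \<partial>lborel) = ennreal (\<integral>t. indicator B t * g c t \<partial>lborel)"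
    by (rule nn_integral_eq_integral[OF int]) (simp add: hB)
  have "ennreal (measure P (Ev c \<inter> {\<omega>\<in>space P. tau \<omega> \<in> B})) = ennreal (\<integral>t. indicator B t * g c t \<partial>lborel)"
    using s1 s2 s3 s4 s5 N_eq[OF c] by simp
  moreover have "0 \<le> (\<integral>t. indicator B t * g c t \<partial>lborel)" by (rule integral_nonneg_AE) (simp add: hB)
  ultimately show ?thesis by (simp add: ennreal_inj)
qed


lemma gB_int:
  assumes c: "c \<in> S - E" and B: "B \<in> sets borel" "B \<subseteq> {0..}"
  shows "integrable lborel (\<lambda>t. indicator B t * g c t)"
proof -
  have "integrable lborel (\<lambda>t. indicator B t *\<^sub>R (g c t * indicator {0..} t))"
    by (rule integrable_mult_indicator[OF _ g_integrable[OF c]]) (use B in simp)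
  moreover have "(\<lambda>t. indicator B t *\<^sub>R (g c t * indicator {0..} t)) = (\<lambda>t. indicator B t * g c t)"
  proof
    fix t show "indicator B t *\<^sub>R (g c t * indicator {0..} t) = indicator B t * g c t"
      using B(2) by (cases "t \<in> B") auto
  qed
  ultimately show ?thesis by simp
qed

end



lemma finite_Sall: "finite (Sall p)" by (simp add: Sall_def finite_Estates)

lemma Sall_split: "Sall p = Estates p \<union> {DeltaO, DeltaA, Cem}" by (simp add: Sall_def)

lemma notE: "DeltaO \<notin> Estates p" "DeltaA \<notin> Estates p" "Cem \<notin> Estates p"
  by (auto simp: Estates_def)

lemma Qfull_out: "m \<notin> Estates p \<Longrightarrow> Qfull p T s l m k = 0"
  by (simp add: Qfull_def)

lemma Qfull_in: "m \<in> Estates p \<Longrightarrow> k \<noteq> Cem \<Longrightarrow> Qfull p T s l m k = Gmat T s l m k"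
  by (simp add: Qfull_def)

lemma mpow_block:
  assumes "j \<in> Estates p" "k \<in> Estates p"
  shows "mpow (Sall p) (mscale x (Qfull p T s l)) n j k = mpow (Estates p) (mscale x (Gmat T s l)) n j k"
  using assms(2)
proof (induction n arbitrary: k)
  case 0 then show ?case by simp
next
  case (Suc n)
  have "mpow (Sall p) (mscale x (Qfull p T s l)) (Suc n) j k
      = (\<Sum>m\<in>Sall p. mpow (Sall p) (mscale x (Qfull p T s l)) n j m * mscale x (Qfull p T s l) m k)"
    by (simp add: mmult_def)
  also have "\<dots> = (\<Sum>m\<in>Estates p. mpow (Estates p) (mscale x (Gmat T s l)) n j m * mscale x (Gmat T s l) m k)"
  proof (rule sum.mono_neutral_cong_right)
    show "finite (Sall p)" by (rule finite_Sall)
    show "Estates p \<subseteq> Sall p" by (auto simp: Sall_def)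
    show "\<forall>m\<in>Sall p - Estates p. mpow (Sall p) (mscale x (Qfull p T s l)) n j m * mscale x (Qfull p T s l) m k = 0"
      by (simp add: mscale_def Qfull_out)
    fix m assume m: "m \<in> Estates p"
    have "k \<noteq> Cem" using Suc.prems notE by auto
    then show "mpow (Sall p) (mscale x (Qfull p T s l)) n j m * mscale x (Qfull p T s l) m k
        = mpow (Estates p) (mscale x (Gmat T s l)) n j m * mscale x (Gmat T s l) m k"
      using Suc.IH[OF m] m by (simp add: mscale_def Qfull_in)
  qed
  also have "\<dots> = mpow (Estates p) (mscale x (Gmat T s l)) (Suc n) j k" by (simp add: mmult_def)
  finally show ?case .
qed

lemma mexp_block:
  assumes "j \<in> Estates p" "k \<in> Estates p"
  shows "mexp (Sall p) (mscale x (Qfull p T s l)) j k = mexp (Estates p) (mscale x (Gmat T s l)) j k"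
  unfolding mexp_def using mpow_block[OF assms] by simp

lemma absorb_inst:
  assumes "ctmc (Sall p) (Qfull p T s l) Pj X j" "j \<in> Estates p"
  shows "absorb (Sall p) (Qfull p T s l) Pj X j (Estates p)"
  using assms by unfold_locales (auto simp: finite_Sall Sall_def Qfull_out finite_Estates)

lemma g_inst:
  assumes "j \<in> Estates p" "c \<in> {DeltaO, DeltaA}"
  shows "(\<Sum>k\<in>Sall p. mexp (Sall p) (mscale x (Qfull p T s l)) j k * Qfull p T s l k c)
       = (\<Sum>k\<in>Estates p. mexp (Estates p) (mscale x (Gmat T s l)) j k * Gmat T s l k c)"
proof (rule sum.mono_neutral_cong_right)
  show "finite (Sall p)" by (rule finite_Sall)
  show "Estates p \<subseteq> Sall p" by (auto simp: Sall_def)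
  show "\<forall>k\<in>Sall p - Estates p. mexp (Sall p) (mscale x (Qfull p T s l)) j k * Qfull p T s l k c = 0"
    by (simp add: Qfull_out)
  fix k assume k: "k \<in> Estates p"
  then show "mexp (Sall p) (mscale x (Qfull p T s l)) j k * Qfull p T s l k c
       = mexp (Estates p) (mscale x (Gmat T s l)) j k * Gmat T s l k c"
    using assms by (auto simp: mexp_block Qfull_in)
qed

lemma Gdiff: "k \<in> Estates p \<Longrightarrow> Gmat T s l k DeltaO - Gmat T s l k DeltaA = vv s k"
  by (auto simp: Estates_def vv_def splus_def sminus_def max_def)

lemma gdiff_inst:
  assumes "j \<in> Estates p"
  shows "(\<Sum>k\<in>Sall p. mexp (Sall p) (mscale x (Qfull p T s l)) j k * Qfull p T s l k DeltaO)
       - (\<Sum>k\<in>Sall p. mexp (Sall p) (mscale x (Qfull p T s l)) j k * Qfull p T s l k DeltaA)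
       = (\<Sum>c\<in>Estates p. mexp (Estates p) (mscale x (Gmat T s l)) j c * vv s c)"
proof -
  have "(\<Sum>k\<in>Estates p. mexp (Estates p) (mscale x (Gmat T s l)) j k * Gmat T s l k DeltaO)
      - (\<Sum>k\<in>Estates p. mexp (Estates p) (mscale x (Gmat T s l)) j k * Gmat T s l k DeltaA)
      = (\<Sum>c\<in>Estates p. mexp (Estates p) (mscale x (Gmat T s l)) j c * vv s c)"
    unfolding sum_subtractf[symmetric]
    by (rule sum.cong[OF refl]) (metis Gdiff right_diff_distrib)
  then show ?thesis using g_inst[OF assms, of DeltaO] g_inst[OF assms, of DeltaA] by simp
qed

lemma main_j:
  assumes ct: "ctmc (Sall p) (Qfull p T s l) Pj X j" and j: "j \<in> Estates p"
  shows "set_integrable lborel {0..} (\<lambda>x. \<Sum>c\<in>Estates p. mexp (Estates p) (mscale x (Gmat T s l)) j c * vv s c)"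
    and "\<And>B. B \<in> sets borel \<Longrightarrow> B \<subseteq> {0..} \<Longrightarrow>
       (\<integral>\<omega>. indicator B (tau p X \<omega>) * beta (X \<omega> (tau p X \<omega>)) \<partial>Pj)
        = (LINT x:B|lborel. (\<Sum>c\<in>Estates p. mexp (Estates p) (mscale x (Gmat T s l)) j c * vv s c))"
proof -
  interpret J: absorb "Sall p" "Qfull p T s l" Pj X j "Estates p" by (rule absorb_inst[OF ct j])
  have cO: "DeltaO \<in> Sall p - Estates p" and cA: "DeltaA \<in> Sall p - Estates p"
    by (auto simp: Sall_def notE)
  have gd: "J.g DeltaO x - J.g DeltaA x = (\<Sum>c\<in>Estates p. mexp (Estates p) (mscale x (Gmat T s l)) j c * vv s c)" for x
    unfolding J.g_def by (rule gdiff_inst[OF j])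
  have tau_eq: "J.tau = tau p X" by (rule ext) (simp add: J.tau_def tau_def)
  show "set_integrable lborel {0..} (\<lambda>x. \<Sum>c\<in>Estates p. mexp (Estates p) (mscale x (Gmat T s l)) j c * vv s c)"
  proof -
    have "integrable lborel (\<lambda>t. J.g DeltaO t * indicator {0..} t - J.g DeltaA t * indicator {0..} t)"
      by (intro Bochner_Integration.integrable_diff J.g_integrable cO cA)
    moreover have "(\<lambda>t. J.g DeltaO t * indicator {0..} t - J.g DeltaA t * indicator {0..} t)
        = (\<lambda>x. indicator {0..} x *\<^sub>R (\<Sum>c\<in>Estates p. mexp (Estates p) (mscale x (Gmat T s l)) j c * vv s c))"
    proof (rule ext)
      fix x show "J.g DeltaO x * indicator {0..} x - J.g DeltaA x * indicator {0..} x
        = indicator {0..} x *\<^sub>R (\<Sum>c\<in>Estates p. mexp (Estates p) (mscale x (Gmat T s l)) j c * vv s c)"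
        unfolding gd[symmetric] by (simp add: algebra_simps)
    qed
    ultimately show ?thesis unfolding set_integrable_def by simp
  qed
  fix B :: "real set" assume B: "B \<in> sets borel" "B \<subseteq> {0..}"
  let ?TB = "{\<omega> \<in> space Pj. tau p X \<omega> \<in> B}"
  have TB: "?TB \<in> sets Pj" using J.TB_sets[OF B(1)] unfolding tau_eq .
  have EO: "J.Ev DeltaO \<inter> ?TB \<in> sets Pj" using J.Ev_sets TB by auto
  have EA: "J.Ev DeltaA \<inter> ?TB \<in> sets Pj" using J.Ev_sets TB by auto
  have "(\<integral>\<omega>. indicator B (tau p X \<omega>) * beta (X \<omega> (tau p X \<omega>)) \<partial>Pj)
      = (\<integral>\<omega>. indicator (J.Ev DeltaO \<inter> ?TB) \<omega> - indicator (J.Ev DeltaA \<inter> ?TB) \<omega> \<partial>Pj)"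
    by (rule Bochner_Integration.integral_cong[OF refl])
       (use J.h_decomp[OF _ B(2) notE(1) notE(2)] in \<open>simp add: tau_eq\<close>)
  also have "\<dots> = measure Pj (J.Ev DeltaO \<inter> ?TB) - measure Pj (J.Ev DeltaA \<inter> ?TB)"
    using EO EA by (subst Bochner_Integration.integral_diff) (auto intro!: integrable_real_indicator simp: J.emeasure_finite less_top[symmetric] Int_absorb2 sets.sets_into_space)
  also have "\<dots> = (\<integral>t. indicator B t * J.g DeltaO t \<partial>lborel) - (\<integral>t. indicator B t * J.g DeltaA t \<partial>lborel)"
    using J.Ev_measure[OF cO B] J.Ev_measure[OF cA B] unfolding tau_eq by simp
  also have "\<dots> = (\<integral>t. indicator B t * J.g DeltaO t - indicator B t * J.g DeltaA t \<partial>lborel)"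
    by (rule Bochner_Integration.integral_diff[symmetric]) (intro J.gB_int cO cA B)+
  also have "\<dots> = (LINT x:B|lborel. (\<Sum>c\<in>Estates p. mexp (Estates p) (mscale x (Gmat T s l)) j c * vv s c))"
    unfolding set_lebesgue_integral_def
  proof (rule Bochner_Integration.integral_cong[OF refl])
    fix x show "indicator B x * J.g DeltaO x - indicator B x * J.g DeltaA x
      = indicator B x *\<^sub>R (\<Sum>c\<in>Estates p. mexp (Estates p) (mscale x (Gmat T s l)) j c * vv s c)"
      unfolding gd[symmetric] by (simp add: algebra_simps)
  qed
  finally show "(\<integral>\<omega>. indicator B (tau p X \<omega>) * beta (X \<omega> (tau p X \<omega>)) \<partial>Pj)
        = (LINT x:B|lborel. (\<Sum>c\<in>Estates p. mexp (Estates p) (mscale x (Gmat T s l)) j c * vv s c))" .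
qed

theorem theorem3p1:
  fixes p :: nat and T :: "nat \<Rightarrow> nat \<Rightarrow> real" and s :: "nat \<Rightarrow> real" and l :: real
    and P :: "st \<Rightarrow> 'w measure" and X :: "'w \<Rightarrow> real \<Rightarrow> st" and i :: nat
  assumes "1 \<le> p"
    and "lambda0 p T s \<le> l"
    and "\<forall>j\<in>Estates p. ctmc (Sall p) (Qfull p T s l) (P j) X j"
    and "\<forall>j\<in>Estates p. transient (P j) X j"
    and "i \<in> {1..p}"
  shows
    "(\<forall>x\<ge>0. (\<Sum>k\<in>{1..p}. mexp {1..p} (mscale x (\<lambda>a b. T a b - (if a = b then l else 0))) i k * s k)
        = (\<Sum>c\<in>Estates p. mexp (Estates p) (mscale x (Gmat T s l)) (Ost i) c
              * (case c of Ost k \<Rightarrow> s k | Ast k \<Rightarrow> - s k | _ \<Rightarrow> 0)))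
   \<and> (\<forall>x\<ge>0. - (\<Sum>k\<in>{1..p}. mexp {1..p} (mscale x (\<lambda>a b. T a b - (if a = b then l else 0))) i k * s k)
        = (\<Sum>c\<in>Estates p. mexp (Estates p) (mscale x (Gmat T s l)) (Ast i) c
              * (case c of Ost k \<Rightarrow> s k | Ast k \<Rightarrow> - s k | _ \<Rightarrow> 0)))
   \<and> set_integrable lborel {0..}
       (\<lambda>x. \<Sum>k\<in>{1..p}. mexp {1..p} (mscale x (\<lambda>a b. T a b - (if a = b then l else 0))) i k * s k)
   \<and> (\<forall>B\<in>sets borel. B \<subseteq> {0..} \<longrightarrow>
        (\<integral>\<omega>. indicator B (tau p X \<omega>) * beta (X \<omega> (tau p X \<omega>)) \<partial>P (Ost i))
          = (LINT x:B|lborel. (\<Sum>k\<in>{1..p}. mexp {1..p} (mscale x (\<lambda>a b. T a b - (if a = b then l else 0))) i k * s k)))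
   \<and> (\<forall>B\<in>sets borel. B \<subseteq> {0..} \<longrightarrow>
        (\<integral>\<omega>. indicator B (tau p X \<omega>) * beta (X \<omega> (tau p X \<omega>)) \<partial>P (Ast i))
          = (LINT x:B|lborel. - (\<Sum>k\<in>{1..p}. mexp {1..p} (mscale x (\<lambda>a b. T a b - (if a = b then l else 0))) i k * s k)))"
proof -
  note ct = assms(3)
  have jO: "Ost i \<in> Estates p" and jA: "Ast i \<in> Estates p" using assms(5) by (auto simp: Estates_def)
  have ctO: "ctmc (Sall p) (Qfull p T s l) (P (Ost i)) X (Ost i)" using ct jO by blast
  have ctA: "ctmc (Sall p) (Qfull p T s l) (P (Ast i)) X (Ast i)" using ct jA by blast
  have vv_eq: "\<And>c. (case c of Ost k \<Rightarrow> s k | Ast k \<Rightarrow> - s k | _ \<Rightarrow> 0) = vv s c" by (simp add: vv_def)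
  have eO: "(\<lambda>x. \<Sum>c\<in>Estates p. mexp (Estates p) (mscale x (Gmat T s l)) (Ost i) c * vv s c)
      = (\<lambda>x. \<Sum>k\<in>{1..p}. mexp {1..p} (mscale x (\<lambda>a b. T a b - (if a = b then l else 0))) i k * s k)"
    by (rule ext) (rule conj12(1)[OF assms(5)])
  have eA: "(\<lambda>x. \<Sum>c\<in>Estates p. mexp (Estates p) (mscale x (Gmat T s l)) (Ast i) c * vv s c)
      = (\<lambda>x. - (\<Sum>k\<in>{1..p}. mexp {1..p} (mscale x (\<lambda>a b. T a b - (if a = b then l else 0))) i k * s k))"
    by (rule ext) (rule conj12(2)[OF assms(5)])
  show ?thesis
    unfolding vv_eq
  proof (intro conjI allI impI ballI)
    fix x :: real
    show "(\<Sum>k\<in>{1..p}. mexp {1..p} (mscale x (\<lambda>a b. T a b - (if a = b then l else 0))) i k * s k)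
        = (\<Sum>c\<in>Estates p. mexp (Estates p) (mscale x (Gmat T s l)) (Ost i) c * vv s c)"
      using conj12(1)[OF assms(5)] by simp
    show "- (\<Sum>k\<in>{1..p}. mexp {1..p} (mscale x (\<lambda>a b. T a b - (if a = b then l else 0))) i k * s k)
        = (\<Sum>c\<in>Estates p. mexp (Estates p) (mscale x (Gmat T s l)) (Ast i) c * vv s c)"
      using conj12(2)[OF assms(5)] by simp
  next
    show "set_integrable lborel {0..}
       (\<lambda>x. \<Sum>k\<in>{1..p}. mexp {1..p} (mscale x (\<lambda>a b. T a b - (if a = b then l else 0))) i k * s k)"
      using main_j(1)[OF ctO jO] unfolding eO .
  next
    fix B :: "real set" assume B: "B \<in> sets borel" "B \<subseteq> {0..}"
    show "(\<integral>\<omega>. indicator B (tau p X \<omega>) * beta (X \<omega> (tau p X \<omega>)) \<partial>P (Ost i))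
          = (LINT x:B|lborel. (\<Sum>k\<in>{1..p}. mexp {1..p} (mscale x (\<lambda>a b. T a b - (if a = b then l else 0))) i k * s k))"
      using main_j(2)[OF ctO jO B] unfolding eO .
  next
    fix B :: "real set" assume B: "B \<in> sets borel" "B \<subseteq> {0..}"
    show "(\<integral>\<omega>. indicator B (tau p X \<omega>) * beta (X \<omega> (tau p X \<omega>)) \<partial>P (Ast i))
          = (LINT x:B|lborel. - (\<Sum>k\<in>{1..p}. mexp {1..p} (mscale x (\<lambda>a b. T a b - (if a = b then l else 0))) i k * s k))"
      using main_j(2)[OF ctA jA B] unfolding eA .
  qed
qed


end
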